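(* Let $0<\theta_m<\theta_M$, $\Theta=(\theta_m,\theta_M)$, $\alpha>0$, $r>0$. For $\lambda>0$ let $(c(\lambda),Q(\cdot,\lambda))$ be the unique pair with $(-\lambda c(\lambda)+\theta\lambda^2+r)Q+\alpha\partial_{\theta\theta}Q=0$ on $\Theta$, $\partial_\theta Q(\theta_m,\lambda)=\partial_\theta Q(\theta_M,\lambda)=0$, $Q>0$, $\int_\Theta Q\,d\theta=1$, and let $c^*=\min_{\lambda>0}c(\lambda)$. Define $H:\mathbb{R}\to\mathbb{R}$ by $H(\lambda)=|\lambda|c(|\lambda|)$ for $\lambda\neq0$ and $H(0)=r$. Then: for all $\lambda\in\mathbb{R}$ there exists a unique solution $(H(\lambda),Q(\cdot,\lambda))$ of $$(-H(\lambda)+\theta\lambda^2+r)Q+\alpha\partial_{\theta\theta}Q=0\text{ on }\Theta,\quad \partial_\theta Q(\theta_m,\lambda)=\partial_\theta Q(\theta_M,\lambda)=0,\quad Q>0,\quad\int_\Theta Q\,d\theta=1;$$ the map $\lambda\mapsto H(\lambda)$ is continuous and convex on $\mathbb{R}$ and satisfies $\lambda^2\theta_m+r\le H(\lambda)\le\lambda^2\theta_M+r$ for all $\lambda$; for all $\lambda\in\mathbb{R}$, $\inf_{s>0}\{sH(\lambda/s)\}=|\lambda|c^*$; and $2\sqrt{\theta_mr}\le c^*\le2\sqrt{\theta_Mr}$.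
   Context: It is known (and taken as given) that for every $\lambda>0$ the pair $(c(\lambda),Q(\cdot,\lambda))$ described exists and is unique, that $\lambda\mapsto c(\lambda)$ is continuous on $(0,\infty)$ with $\lambda^2\theta_m+r\le\lambda c(\lambda)\le\lambda^2\theta_M+r$, and that $c$ attains its minimum $c^*$ at some $\lambda^*>0$. *)

theory Defs
  imports "HOL-Analysis.Analysis"
begin

definition eig_pair :: "real \<Rightarrow> real \<Rightarrow> real \<Rightarrow> real \<Rightarrow> real \<Rightarrow> real \<Rightarrow> (real \<Rightarrow> real) \<Rightarrow> bool" where
  "eig_pair tm tM al r lam h Q \<longleftrightarrow>
     (\<exists>Q' Q''.
        (\<forall>t\<in>{tm..tM}. (Q has_real_derivative Q' t) (at t within {tm..tM}))
      \<and> (\<forall>t\<in>{tm<..<tM}. (Q' has_real_derivative Q'' t) (at t))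
      \<and> (\<forall>t\<in>{tm<..<tM}. (- h + t * lam\<^sup>2 + r) * Q t + al * Q'' t = 0)
      \<and> Q' tm = 0 \<and> Q' tM = 0)
   \<and> (\<forall>t\<in>{tm<..<tM}. Q t > 0)
   \<and> (Q has_integral 1) {tm..tM}"

definition cfun :: "real \<Rightarrow> real \<Rightarrow> real \<Rightarrow> real \<Rightarrow> real \<Rightarrow> real" where
  "cfun tm tM al r lam = (THE c. \<exists>Q. eig_pair tm tM al r lam (lam * c) Q)"

definition Hfun :: "real \<Rightarrow> real \<Rightarrow> real \<Rightarrow> real \<Rightarrow> real \<Rightarrow> real" where
  "Hfun tm tM al r lam = (if lam = 0 then r else \<bar>lam\<bar> * cfun tm tM al r \<bar>lam\<bar>)"

definition cstar :: "real \<Rightarrow> real \<Rightarrow> real \<Rightarrow> real \<Rightarrow> real" where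
  "cstar tm tM al r = Inf (cfun tm tM al r ` {0<..})"

end

theory Submission
  imports Defs
begin

lemma reg:
  fixes Q Q' f :: "real \<Rightarrow> real"
  assumes ab: "a < b"
    and d1: "\<And>t. t \<in> {a..b} \<Longrightarrow> (Q has_real_derivative Q' t) (at t within {a..b})"
    and d2: "\<And>t. t \<in> {a<..<b} \<Longrightarrow> (Q' has_real_derivative f t) (at t)"
    and cf: "continuous_on {a..b} f"
  shows "\<And>t. t \<in> {a..b} \<Longrightarrow> Q' t = Q' a + integral {a..t} f"
proof -
  define G where "G t = integral {a..t} f" for t
  have dG: "\<And>t. t\<in>{a..b} \<Longrightarrow> (G has_real_derivative f t) (at t within {a..b})"
    unfolding G_def using integral_has_real_derivative[OF cf] by blast
  have Gc: "continuous_on {a..b} G"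
    using dG by (meson DERIV_continuous continuous_on_eq_continuous_within)
  have "\<exists>C. \<forall>t\<in>{a<..<b}. Q' t - G t = C"
  proof (rule has_field_derivative_zero_constant)
    fix x assume x: "x \<in> {a<..<b}"
    have "(G has_real_derivative f x) (at x)"
      using dG[of x] x at_within_Icc_at[of a x b] by auto
    then have "((\<lambda>t. Q' t - G t) has_real_derivative (f x - f x)) (at x)"
      using d2[OF x] by (intro derivative_intros) auto
    then show "((\<lambda>t. Q' t - G t) has_real_derivative 0) (at x within {a<..<b})"
      by (simp add: has_field_derivative_at_within)
  qed simp
  then obtain C where C: "\<And>t. t\<in>{a<..<b} \<Longrightarrow> Q' t - G t = C" by blast
  define I where "I t = integral {a..t} G" for t
  have dI: "\<And>t. t\<in>{a..b} \<Longrightarrow> (I has_real_derivative G t) (at t within {a..b})"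
    unfolding I_def using integral_has_real_derivative[OF Gc] by blast
  define E where "E t = Q t - C*t - I t" for t
  have dE: "(E has_real_derivative (Q' t - C - G t)) (at t within {a..b})" if t: "t\<in>{a..b}" for t
  proof -
    have "((\<lambda>u. Q u - C*u - I u) has_real_derivative (Q' t - C*1 - G t)) (at t within {a..b})"
      by (intro derivative_intros d1[OF t] dI[OF t] DERIV_cmult[OF DERIV_ident])
    then show ?thesis by (simp add: E_def[abs_def])
  qed
  have Ec: "continuous_on {a..b} E"
    using dE by (meson DERIV_continuous continuous_on_eq_continuous_within)
  have Econst: "E t = E a" if t: "t \<in> {a..b}" for t
  proof (cases "t = a")
    case False
    then have at: "a < t" using t by auto
    show ?thesis
    proof (rule DERIV_isconst_end[OF at])
      show "continuous_on {a..t} E" using Ec t by (auto intro: continuous_on_subset)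
      fix x assume x: "a < x" "x < t"
      then have "(E has_real_derivative (Q' x - C - G x)) (at x)"
        using dE[of x] t at_within_Icc_at[of a x b] by auto
      moreover have "Q' x - C - G x = 0" using C[of x] x t by auto
      ultimately show "DERIV E x :> 0" by simp
    qed
  qed simp
  have QQ: "\<And>t. t \<in> {a..b} \<Longrightarrow> Q' t = C + G t"
  proof -
    fix t assume t: "t \<in> {a..b}"
    have "((\<lambda>u. E a + C*u + I u) has_real_derivative (0 + C*1 + G t)) (at t within {a..b})"
      by (intro derivative_intros dI[OF t] DERIV_cmult[OF DERIV_ident])
    then have "((\<lambda>u. E a + C*u + I u) has_real_derivative (C + G t)) (at t within {a..b})"
      by simp
    moreover have "E a + C*x + I x = Q x" if "x \<in> {a..b}" for x
      using Econst[OF that] unfolding E_def by linarith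
    ultimately have "(Q has_real_derivative (C + G t)) (at t within {a..b})"
      using has_field_derivative_transform_within[where d=1 and S="{a..b}" and a=t
          and f="\<lambda>u. E a + C*u + I u" and g=Q] t by auto
    then show "Q' t = C + G t"
      using d1[OF t] vector_derivative_unique_within_closed_interval[of a b t Q] ab t
      by (auto simp: has_real_derivative_iff_has_vector_derivative)
  qed
  fix t assume "t \<in> {a..b}"
  then show "Q' t = Q' a + integral {a..t} f"
    using QQ[of t] QQ[of a] ab by (simp add: G_def)
qed

lemma pos_end:
  fixes Q Q' k :: "real \<Rightarrow> real"
  assumes ab: "a < b" and Qc: "continuous_on {a..b} Q" and Q'c: "continuous_on {a..b} Q'"
    and dQ: "\<And>t. t\<in>{a<..<b} \<Longrightarrow> (Q has_real_derivative Q' t) (at t)"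
    and dQ': "\<And>t. t\<in>{a<..<b} \<Longrightarrow> (Q' has_real_derivative (- k t * Q t)) (at t)"
    and kb: "\<And>t. t\<in>{a<..<b} \<Longrightarrow> \<bar>1 - k t\<bar> \<le> K"
    and pos: "\<And>t. t\<in>{a<..<b} \<Longrightarrow> Q t > 0"
    and Q'a: "Q' a = 0" and Q'b: "Q' b = 0"
  shows "Q a > 0 \<and> Q b > 0"
proof -
  define m where "m = (a+b)/2"
  have m: "a < m" "m < b" using ab by (auto simp: m_def)
  define E where "E t = (Q t)\<^sup>2 + (Q' t)\<^sup>2" for t
  have Ec: "continuous_on {a..b} E" unfolding E_def
    by (intro continuous_intros Qc Q'c)
  have dE: "(E has_real_derivative (2*Q t*Q' t*(1 - k t))) (at t)" if t: "t\<in>{a<..<b}" for t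
  proof -
    have "((\<lambda>u. Q u * Q u + Q' u * Q' u) has_real_derivative
        (2*Q t*Q' t*(1 - k t))) (at t)"
      by (rule derivative_eq_intros dQ[OF t] dQ'[OF t] refl)+ (simp add: algebra_simps)
    then show ?thesis by (simp add: E_def[abs_def] power2_eq_square)
  qed
  have Eb: "\<bar>2*Q t*Q' t*(1 - k t)\<bar> \<le> K * E t" if t: "t\<in>{a<..<b}" for t
  proof -
    have "0 \<le> (\<bar>Q t\<bar> - \<bar>Q' t\<bar>)\<^sup>2" by simp
    then have 1: "2*\<bar>Q t*Q' t\<bar> \<le> E t"
      by (simp add: E_def power2_diff abs_mult)
    have "\<bar>2*Q t*Q' t*(1 - k t)\<bar> = (2*\<bar>Q t*Q' t\<bar>) * \<bar>1 - k t\<bar>"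
      by (simp add: abs_mult)
    also have "\<dots> \<le> E t * K"
      using 1 kb[OF t] by (intro mult_mono) auto
    finally show ?thesis by (simp add: mult.commute)
  qed
  have E0: "E t \<ge> 0" for t by (simp add: E_def)
  have Em: "E m > 0" using pos[of m] m by (simp add: E_def add_pos_nonneg)
  have ge: "Q a \<ge> 0 \<and> Q b \<ge> 0"
  proof -
    have cl: "continuous_on (closure {a<..<b}) Q" using Qc ab by simp
    show ?thesis
      using continuous_ge_on_closure[OF cl, of a 0] continuous_ge_on_closure[OF cl, of b 0]
        pos ab by (auto simp: less_imp_le)
  qed
  have "Q a \<noteq> 0"
  proof
    assume Qa: "Q a = 0"
    define P where "P t = E t * exp (- K * t)" for t
    have "P m \<le> P a"
    proof (rule DERIV_nonpos_imp_decreasing_open[of a m P])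
      show "a \<le> m" using m by simp
      show "continuous_on {a..m} P" unfolding P_def
        using m ab by (intro continuous_intros continuous_on_subset[OF Ec]) auto
      fix x assume x: "a < x" "x < m"
      then have xi: "x \<in> {a<..<b}" using m by auto
      have "(P has_real_derivative ((2*Q x*Q' x*(1 - k x) - K * E x) * exp (- K * x))) (at x)"
        unfolding P_def[abs_def]
        by (rule derivative_eq_intros dE[OF xi] refl)+ (simp add: algebra_simps)
      moreover have "((2*Q x*Q' x*(1 - k x) - K * E x) * exp (- K * x)) \<le> 0"
      proof -
        have "2*Q x*Q' x*(1 - k x) \<le> K * E x" using Eb[OF xi] by linarith
        then have "(2*Q x*Q' x*(1 - k x) - K * E x) * exp (- K * x) \<le> 0"
          by (intro mult_nonpos_nonneg) auto
        then show ?thesis by simp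
      qed
      ultimately show "\<exists>y. DERIV P x :> y \<and> y \<le> 0" by blast
    qed
    moreover have "P a = 0" by (simp add: P_def E_def Qa Q'a)
    moreover have "P m > 0" using Em by (simp add: P_def)
    ultimately show False by simp
  qed
  moreover have "Q b \<noteq> 0"
  proof
    assume Qb: "Q b = 0"
    define P where "P t = E t * exp (K * t)" for t
    have "P m \<le> P b"
    proof (rule DERIV_nonneg_imp_increasing_open[of m b P])
      show "m \<le> b" using m by simp
      show "continuous_on {m..b} P" unfolding P_def
        using m ab by (intro continuous_intros continuous_on_subset[OF Ec]) auto
      fix x assume x: "m < x" "x < b"
      then have xi: "x \<in> {a<..<b}" using m by auto
      have "(P has_real_derivative ((2*Q x*Q' x*(1 - k x) + K * E x) * exp (K * x))) (at x)"
        unfolding P_def[abs_def]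
        by (rule derivative_eq_intros dE[OF xi] refl)+ (simp add: algebra_simps)
      moreover have "((2*Q x*Q' x*(1 - k x) + K * E x) * exp (K * x)) \<ge> 0"
      proof -
        have "- (2*Q x*Q' x*(1 - k x)) \<le> K * E x" using Eb[OF xi] by linarith
        then have "(2*Q x*Q' x*(1 - k x) + K * E x) * exp (K * x) \<ge> 0"
          by (intro mult_nonneg_nonneg) auto
        then show ?thesis by simp
      qed
      ultimately show "\<exists>y. DERIV P x :> y \<and> y \<ge> 0" by blast
    qed
    moreover have "P b = 0" by (simp add: P_def E_def Qb Q'b)
    moreover have "P m > 0" using Em by (simp add: P_def)
    ultimately show False by simp
  qed
  ultimately show ?thesis using ge by auto
qed

lemma eig_props:
  assumes eig: "eig_pair a b al r lam h Q" and ab: "a < b" and al: "0 < al"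
  obtains Q' where
    "Q' a = 0" "Q' b = 0"
    "\<And>t. t\<in>{a..b} \<Longrightarrow> (Q has_real_derivative Q' t) (at t within {a..b})"
    "\<And>t. t\<in>{a<..<b} \<Longrightarrow> (Q has_real_derivative Q' t) (at t)"
    "\<And>t. t\<in>{a<..<b} \<Longrightarrow> (Q' has_real_derivative (-((-h + t*lam\<^sup>2 + r) * Q t)/al)) (at t)"
    "continuous_on {a..b} Q" "continuous_on {a..b} Q'"
    "\<And>t. t\<in>{a..b} \<Longrightarrow> Q t > 0"
    "(Q has_integral 1) {a..b}"
    "\<And>t. t\<in>{a..b} \<Longrightarrow> Q' t = integral {a..t} (\<lambda>s. -((-h + s*lam\<^sup>2 + r) * Q s)/al)"
proof -
  obtain Q' Q'' where
    d1: "\<And>t. t\<in>{a..b} \<Longrightarrow> (Q has_real_derivative Q' t) (at t within {a..b})"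
    and d2: "\<And>t. t\<in>{a<..<b} \<Longrightarrow> (Q' has_real_derivative Q'' t) (at t)"
    and ode: "\<And>t. t\<in>{a<..<b} \<Longrightarrow> (- h + t * lam\<^sup>2 + r) * Q t + al * Q'' t = 0"
    and Qa: "Q' a = 0" and Qb: "Q' b = 0"
    and pos: "\<And>t. t\<in>{a<..<b} \<Longrightarrow> Q t > 0"
    and int: "(Q has_integral 1) {a..b}"
    using eig unfolding eig_pair_def by blast
  define f where "f t = -((-h + t*lam\<^sup>2 + r) * Q t)/al" for t
  have Q''f: "Q'' t = f t" if "t\<in>{a<..<b}" for t
    using ode[OF that] al by (simp add: f_def field_simps)
  have d2': "\<And>t. t\<in>{a<..<b} \<Longrightarrow> (Q' has_real_derivative f t) (at t)"
    using d2 Q''f by auto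
  have Qc: "continuous_on {a..b} Q"
    using d1 by (meson DERIV_continuous continuous_on_eq_continuous_within)
  have fc: "continuous_on {a..b} f" unfolding f_def
    by (intro continuous_intros Qc) (use al in auto)
  have Q'I: "Q' t = integral {a..t} f" if "t\<in>{a..b}" for t
  proof -
    have "Q' t = Q' a + integral {a..t} f"
      by (rule reg[where Q=Q and Q'=Q' and f=f, OF ab _ _ fc that]) (auto intro: d1 d2')
    then show ?thesis using Qa by simp
  qed
  have dQ': "(Q' has_real_derivative f t) (at t within {a..b})" if t: "t\<in>{a..b}" for t
    by (rule has_field_derivative_transform_within[where d=1,
          OF integral_has_real_derivative[OF fc t]]) (use Q'I t in auto)
  have Q'c: "continuous_on {a..b} Q'"
    using dQ' by (meson DERIV_continuous continuous_on_eq_continuous_within)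
  have dQo: "(Q has_real_derivative Q' t) (at t)" if "t\<in>{a<..<b}" for t
    using d1[of t] that at_within_Icc_at[of a t b] by auto
  define K where "K = 1 + (\<bar>h\<bar> + (\<bar>a\<bar>+\<bar>b\<bar>)*lam\<^sup>2 + \<bar>r\<bar>)/al"
  have kb: "\<bar>1 - (-h + t*lam\<^sup>2 + r)/al\<bar> \<le> K" if t: "t\<in>{a<..<b}" for t
  proof -
    have "\<bar>-h + t*lam\<^sup>2 + r\<bar> \<le> \<bar>h\<bar> + \<bar>t\<bar>*lam\<^sup>2 + \<bar>r\<bar>"
    proof -
      have "\<bar>t*lam\<^sup>2\<bar> = \<bar>t\<bar>*lam\<^sup>2" by (simp add: abs_mult)
      moreover have "\<bar>-h + t*lam\<^sup>2 + r\<bar> \<le> \<bar>h\<bar> + \<bar>t*lam\<^sup>2\<bar> + \<bar>r\<bar>" by linarith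
      ultimately show ?thesis by simp
    qed
    also have "\<dots> \<le> \<bar>h\<bar> + (\<bar>a\<bar>+\<bar>b\<bar>)*lam\<^sup>2 + \<bar>r\<bar>"
      using t by (intro add_mono mult_right_mono) auto
    finally have 1: "\<bar>(-h + t*lam\<^sup>2 + r)/al\<bar> \<le> (\<bar>h\<bar> + (\<bar>a\<bar>+\<bar>b\<bar>)*lam\<^sup>2 + \<bar>r\<bar>)/al"
      using al by (simp add: divide_right_mono)
    have "\<bar>1 - (-h + t*lam\<^sup>2 + r)/al\<bar> \<le> 1 + \<bar>(-h + t*lam\<^sup>2 + r)/al\<bar>"
      using abs_triangle_ineq4[of 1 "(-h + t*lam\<^sup>2 + r)/al"] by simp
    then show ?thesis using 1 by (simp add: K_def)
  qed
  have pe: "Q a > 0 \<and> Q b > 0"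
  proof (rule pos_end[OF ab Qc Q'c dQo, where k="\<lambda>t. (-h + t*lam\<^sup>2 + r)/al" and K=K])
    fix t assume "t\<in>{a<..<b}"
    then show "(Q' has_real_derivative - ((- h + t * lam\<^sup>2 + r) / al) * Q t) (at t)"
      using d2'[of t] by (simp add: f_def)
  qed (use kb pos Qa Qb in auto)
  have posc: "Q t > 0" if "t\<in>{a..b}" for t
    using pos[of t] pe that by (cases "t = a"; cases "t = b") auto
  have Q'I': "Q' t = integral {a..t} (\<lambda>s. -((-h + s*lam\<^sup>2 + r) * Q s)/al)" if "t\<in>{a..b}" for t
    using Q'I[OF that] by (simp add: f_def[abs_def])
  have d2'': "(Q' has_real_derivative (-((-h + t*lam\<^sup>2 + r) * Q t)/al)) (at t)" if "t\<in>{a<..<b}" for t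
    using d2'[OF that] by (simp add: f_def)
  show ?thesis
    apply (rule that[of Q'])
    apply (fact Qa)
    apply (fact Qb)
    apply (fact d1)
    apply (fact dQo)
    apply (fact d2'')
    apply (fact Qc)
    apply (fact Q'c)
    apply (fact posc)
    apply (fact int)
    apply (fact Q'I')
    done
qed

lemma eig0:
  assumes eig: "eig_pair a b al r 0 h Q" and ab: "a < b" and al: "0 < al"
  shows "h = r \<and> (\<forall>t\<in>{a..b}. Q t = 1/(b-a))"
proof -
  obtain Q' where "Q' a = 0" and Qb: "Q' b = 0"
    and d1: "\<And>t. t\<in>{a..b} \<Longrightarrow> (Q has_real_derivative Q' t) (at t within {a..b})"
    and "\<And>t. t\<in>{a<..<b} \<Longrightarrow> (Q has_real_derivative Q' t) (at t)"
    and "\<And>t. t\<in>{a<..<b} \<Longrightarrow> (Q' has_real_derivative (-((-h + t*0\<^sup>2 + r) * Q t)/al)) (at t)"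
    and "continuous_on {a..b} Q" "continuous_on {a..b} Q'"
    and "\<And>t. t\<in>{a..b} \<Longrightarrow> Q t > 0"
    and int: "(Q has_integral 1) {a..b}"
    and QI: "\<And>t. t\<in>{a..b} \<Longrightarrow> Q' t = integral {a..t} (\<lambda>s. -((-h + s*0\<^sup>2 + r) * Q s)/al)"
    by (rule eig_props[OF eig ab al], rule that)
  have e: "(\<lambda>s. -((-h + s*0\<^sup>2 + r) * Q s)/al) = (\<lambda>s. ((h - r)/al) * Q s)"
    by (auto simp: field_simps)
  have I: "integral {a..t} (\<lambda>s. -((-h + s*0\<^sup>2 + r) * Q s)/al) = ((h-r)/al) * integral {a..t} Q" for t
    unfolding e by simp
  have "0 = ((h-r)/al) * 1"
    using QI[of b] ab Qb I[of b] int by (auto simp add: integral_unique)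
  then have hr: "h = r" using al by simp
  have "\<exists>c. \<forall>x\<in>{a..b}. Q x = c"
  proof (rule has_field_derivative_zero_constant)
    fix x assume x: "x\<in>{a..b}"
    have "Q' x = 0" using QI[OF x] I[of x] hr by simp
    then show "(Q has_real_derivative 0) (at x within {a..b})" using d1[OF x] by simp
  qed simp
  then obtain c where c: "\<And>x. x\<in>{a..b} \<Longrightarrow> Q x = c" by blast
  have "((\<lambda>x. c) has_integral 1) {a..b}"
    using int by (rule has_integral_eq[rotated]) (use c in auto)
  moreover have "((\<lambda>x. c) has_integral (c * (b - a))) {a..b}"
    using has_integral_const_real[of c a b] ab by (simp add: mult.commute)
  ultimately have "c * (b-a) = 1" using has_integral_unique by blast
  then have "c = 1/(b-a)" using ab by (simp add: field_simps)
  then show ?thesis using hr c by auto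
qed

lemma conv_step:
  assumes ab: "a < b" and a0: "0 < a" and al: "0 < al"
    and ex: "eig_pair a b al r x hx Px" and ey: "eig_pair a b al r y hy Py"
    and ez: "eig_pair a b al r z hz Pz"
    and t: "0 \<le> t" "t \<le> 1" and z: "z = (1-t)*x + t*y"
  shows "hz \<le> (1-t)*hx + t*hy"
proof -
  obtain Px' where Pxa: "Px' a = 0" and Pxb: "Px' b = 0"
    and "\<And>s. s\<in>{a..b} \<Longrightarrow> (Px has_real_derivative Px' s) (at s within {a..b})"
    and dPx: "\<And>s. s\<in>{a<..<b} \<Longrightarrow> (Px has_real_derivative Px' s) (at s)"
    and dPx': "\<And>s. s\<in>{a<..<b} \<Longrightarrow> (Px' has_real_derivative (-((-hx + s*x\<^sup>2 + r) * Px s)/al)) (at s)"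
    and cPx: "continuous_on {a..b} Px" and cPx': "continuous_on {a..b} Px'"
    and pPx: "\<And>s. s\<in>{a..b} \<Longrightarrow> Px s > 0"
    and "(Px has_integral 1) {a..b}"
    and "\<And>s. s\<in>{a..b} \<Longrightarrow> Px' s = integral {a..s} (\<lambda>u. -((-hx + u*x\<^sup>2 + r) * Px u)/al)"
    by (rule eig_props[OF ex ab al], rule that)
  obtain Py' where Pya: "Py' a = 0" and Pyb: "Py' b = 0"
    and "\<And>s. s\<in>{a..b} \<Longrightarrow> (Py has_real_derivative Py' s) (at s within {a..b})"
    and dPy: "\<And>s. s\<in>{a<..<b} \<Longrightarrow> (Py has_real_derivative Py' s) (at s)"
    and dPy': "\<And>s. s\<in>{a<..<b} \<Longrightarrow> (Py' has_real_derivative (-((-hy + s*y\<^sup>2 + r) * Py s)/al)) (at s)"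
    and cPy: "continuous_on {a..b} Py" and cPy': "continuous_on {a..b} Py'"
    and pPy: "\<And>s. s\<in>{a..b} \<Longrightarrow> Py s > 0"
    and "(Py has_integral 1) {a..b}"
    and "\<And>s. s\<in>{a..b} \<Longrightarrow> Py' s = integral {a..s} (\<lambda>u. -((-hy + u*y\<^sup>2 + r) * Py u)/al)"
    by (rule eig_props[OF ey ab al], rule that)
  obtain Pz' where Pza: "Pz' a = 0" and Pzb: "Pz' b = 0"
    and "\<And>s. s\<in>{a..b} \<Longrightarrow> (Pz has_real_derivative Pz' s) (at s within {a..b})"
    and dPz: "\<And>s. s\<in>{a<..<b} \<Longrightarrow> (Pz has_real_derivative Pz' s) (at s)"
    and dPz': "\<And>s. s\<in>{a<..<b} \<Longrightarrow> (Pz' has_real_derivative (-((-hz + s*z\<^sup>2 + r) * Pz s)/al)) (at s)"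
    and cPz: "continuous_on {a..b} Pz" and cPz': "continuous_on {a..b} Pz'"
    and pPz: "\<And>s. s\<in>{a..b} \<Longrightarrow> Pz s > 0"
    and "(Pz has_integral 1) {a..b}"
    and "\<And>s. s\<in>{a..b} \<Longrightarrow> Pz' s = integral {a..s} (\<lambda>u. -((-hz + u*z\<^sup>2 + r) * Pz u)/al)"
    by (rule eig_props[OF ez ab al], rule that)
  define uu where "uu s = Px' s / Px s" for s
  define vv where "vv s = Py' s / Py s" for s
  define w where "w s = (1-t)*uu s + t * vv s" for s
  define kx where "kx s = (-hx + s*x\<^sup>2 + r)/al" for s
  define ky where "ky s = (-hy + s*y\<^sup>2 + r)/al" for s
  define Q where "Q s = exp ((1-t)*ln (Px s) + t*ln (Py s))" for s
  define Q' where "Q' s = Q s * w s" for s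
  define Q'' where "Q'' s = Q s * ((w s)\<^sup>2 - (1-t)*(kx s + (uu s)\<^sup>2) - t*(ky s + (vv s)\<^sup>2))" for s
  have Qpos: "Q s > 0" for s by (simp add: Q_def)
  have dQ: "(Q has_real_derivative Q' s) (at s)" if s: "s\<in>{a<..<b}" for s
  proof -
    have p: "Px s > 0" "Py s > 0" using pPx pPy s by auto
    show ?thesis unfolding Q_def[abs_def] Q'_def w_def uu_def vv_def
      by (rule derivative_eq_intros dPx[OF s] dPy[OF s] refl p)+ (use p in \<open>simp add: Q_def field_simps\<close>)
  qed
  have dQ': "(Q' has_real_derivative Q'' s) (at s)" if s: "s\<in>{a<..<b}" for s
  proof -
    have p: "Px s > 0" "Py s > 0" using pPx pPy s by auto
    have np: "Px s \<noteq> 0" "Py s \<noteq> 0" using p by auto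
    have "((\<lambda>s. Q s * ((1-t)*(Px' s / Px s) + t*(Py' s / Py s))) has_real_derivative Q'' s) (at s)"
      apply (rule derivative_eq_intros dQ[OF s] dPx[OF s] dPy[OF s] dPx'[OF s] dPy'[OF s] np | rule refl)+
      using p al apply (simp add: Q'_def Q''_def w_def uu_def vv_def kx_def ky_def field_simps power2_eq_square)
      done
    then show ?thesis by (simp add: Q'_def[abs_def] w_def uu_def vv_def)
  qed
  define F where "F s = al * (Q' s * Pz s - Q s * Pz' s)" for s
  define g where "g s = al * Q'' s * Pz s + (-hz + s*z\<^sup>2 + r) * Q s * Pz s" for s
  have cQ: "continuous_on {a..b} Q" unfolding Q_def
    by (intro continuous_intros cPx cPy) (use pPx pPy in force)+
  have cQ': "continuous_on {a..b} Q'" unfolding Q'_def w_def uu_def vv_def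
    by (intro continuous_intros cQ cPx cPy cPx' cPy') (use pPx pPy in force)+
  have cF: "continuous_on {a..b} F" unfolding F_def
    by (intro continuous_intros cQ cQ' cPz cPz')
  have dF: "(F has_vector_derivative g s) (at s)" if s: "s\<in>{a<..<b}" for s
  proof -
    have "(F has_real_derivative g s) (at s)" unfolding F_def[abs_def]
      by (rule derivative_eq_intros dQ[OF s] dQ'[OF s] dPz[OF s] dPz'[OF s] refl)+
         (use al in \<open>simp add: g_def field_simps\<close>)
    then show ?thesis by (simp add: has_real_derivative_iff_has_vector_derivative)
  qed
  have Fa: "F a = 0" by (simp add: F_def Q'_def w_def uu_def vv_def Pxa Pya Pza)
  have Fb: "F b = 0" by (simp add: F_def Q'_def w_def uu_def vv_def Pxb Pyb Pzb)
  have gint: "(g has_integral 0) {a..b}"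
    using fundamental_theorem_of_calculus_interior[OF _ cF dF] ab Fa Fb by simp
  define h' where "h' = (1-t)*hx + t*hy"
  have gle: "g s \<le> (h' - hz) * (Q s * Pz s)" if s: "s\<in>{a..b}" for s
  proof -
    have p: "Px s > 0" "Py s > 0" "Pz s > 0" "s > 0" using pPx pPy pPz s a0 by auto
    have e1: "(w s)\<^sup>2 - (1-t)*(uu s)\<^sup>2 - t*(vv s)\<^sup>2 = - (t*(1-t)*(uu s - vv s)\<^sup>2)"
      by (simp add: w_def power2_eq_square algebra_simps)
    have e2: "z\<^sup>2 - (1-t)*x\<^sup>2 - t*y\<^sup>2 = - (t*(1-t)*(x - y)\<^sup>2)"
      by (simp add: z power2_eq_square algebra_simps)
    have n1: "t*(1-t)*(uu s - vv s)\<^sup>2 \<ge> 0" "t*(1-t)*(x - y)\<^sup>2 \<ge> 0" using t by auto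
    have "al * Q'' s + (-hz + s*z\<^sup>2 + r) * Q s =
        Q s * (al * ((w s)\<^sup>2 - (1-t)*(uu s)\<^sup>2 - t*(vv s)\<^sup>2) + s * (z\<^sup>2 - (1-t)*x\<^sup>2 - t*y\<^sup>2) + (h' - hz))"
      using al by (simp add: Q''_def kx_def ky_def h'_def field_simps)
    also have "\<dots> \<le> Q s * (h' - hz)"
    proof (rule mult_left_mono)
      have "al * ((w s)\<^sup>2 - (1-t)*(uu s)\<^sup>2 - t*(vv s)\<^sup>2) \<le> 0"
        unfolding e1 using al n1 by (simp add: mult_nonneg_nonneg)
      moreover have "s * (z\<^sup>2 - (1-t)*x\<^sup>2 - t*y\<^sup>2) \<le> 0"
        unfolding e2 using p n1 by (simp add: mult_nonneg_nonneg)
      ultimately show "al * ((w s)\<^sup>2 - (1-t)*(uu s)\<^sup>2 - t*(vv s)\<^sup>2) + s * (z\<^sup>2 - (1-t)*x\<^sup>2 - t*y\<^sup>2) + (h' - hz) \<le> h' - hz"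
        by linarith
    qed (use Qpos in \<open>simp add: less_imp_le\<close>)
    finally have "al * Q'' s + (-hz + s*z\<^sup>2 + r) * Q s \<le> Q s * (h' - hz)" .
    then have "(al * Q'' s + (-hz + s*z\<^sup>2 + r) * Q s) * Pz s \<le> (Q s * (h' - hz)) * Pz s"
      using p by (intro mult_right_mono) auto
    then show ?thesis by (simp add: g_def algebra_simps)
  qed
  have cQP: "continuous_on {a..b} (\<lambda>s. Q s * Pz s)" by (intro continuous_intros cQ cPz)
  obtain J where J: "((\<lambda>s. Q s * Pz s) has_integral J) {a..b}"
    using integrable_continuous_real[OF cQP] by blast
  obtain s0 where s0: "s0 \<in> {a..b}" and smin: "\<And>s. s\<in>{a..b} \<Longrightarrow> Q s0 * Pz s0 \<le> Q s * Pz s"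
    using continuous_attains_inf[OF compact_Icc _ cQP] ab by fastforce
  have mpos: "Q s0 * Pz s0 > 0" using Qpos pPz s0 by simp
  have "Q s0 * Pz s0 * (b - a) \<le> J"
    using has_integral_le[OF has_integral_const_real[of "Q s0 * Pz s0" a b] J] smin ab by (auto simp: mult.commute)
  then have Jpos: "J > 0" using mpos ab by (smt (verit) mult_pos_pos)
  have "0 \<le> (h' - hz) * J"
    using has_integral_le[OF gint has_integral_mult_right[OF J, of "h' - hz"]] gle by auto
  then have "0 \<le> h' - hz" using Jpos by (simp add: zero_le_mult_iff)
  then show ?thesis by (simp add: h'_def)
qed

lemma eig_abs: "eig_pair a b al r lam h Q = eig_pair a b al r \<bar>lam\<bar> h Q"
  unfolding eig_pair_def by simp

theorem proposition1p12:
  fixes tm tM al r :: real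
  defines "c \<equiv> cfun tm tM al r" and "H \<equiv> Hfun tm tM al r" and "cs \<equiv> cstar tm tM al r"
  assumes "0 < tm" and "tm < tM" and "0 < al" and "0 < r"
    and exuniq_c: "\<And>lam. lam > 0 \<Longrightarrow>
        \<exists>Q. eig_pair tm tM al r lam (lam * c lam) Q \<and>
            (\<forall>d Q'. eig_pair tm tM al r lam (lam * d) Q' \<longrightarrow>
                 d = c lam \<and> (\<forall>t\<in>{tm..tM}. Q' t = Q t))"
    and cont_c: "continuous_on {0<..} c"
    and bounds_c: "\<And>lam. lam > 0 \<Longrightarrow>
        lam\<^sup>2 * tm + r \<le> lam * c lam \<and> lam * c lam \<le> lam\<^sup>2 * tM + r"
    and min_c: "\<exists>ls>0. \<forall>lam>0. c ls \<le> c lam"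
  shows "(\<forall>lam. \<exists>Q. eig_pair tm tM al r lam (H lam) Q \<and>
            (\<forall>h Q'. eig_pair tm tM al r lam h Q' \<longrightarrow>
                 h = H lam \<and> (\<forall>t\<in>{tm..tM}. Q' t = Q t)))
       \<and> continuous_on UNIV H \<and> convex_on UNIV H
       \<and> (\<forall>lam. lam\<^sup>2 * tm + r \<le> H lam \<and> H lam \<le> lam\<^sup>2 * tM + r)
       \<and> (\<forall>lam. (INF s\<in>{0<..}. s * H (lam / s)) = \<bar>lam\<bar> * cs)
       \<and> 2 * sqrt (tm * r) \<le> cs \<and> cs \<le> 2 * sqrt (tM * r)"
proof -
  note tm = \<open>0 < tm\<close> and ab = \<open>tm < tM\<close> and al = \<open>0 < al\<close> and r = \<open>0 < r\<close>
  have Hdef: "H lam = (if lam = 0 then r else \<bar>lam\<bar> * c \<bar>lam\<bar>)" for lam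
    by (simp add: H_def c_def Hfun_def)
  have H0: "H 0 = r" by (simp add: Hdef)
  have Hnz: "lam \<noteq> 0 \<Longrightarrow> H lam = \<bar>lam\<bar> * c \<bar>lam\<bar>" for lam by (simp add: Hdef)
  have exH: "\<exists>Q. eig_pair tm tM al r lam (H lam) Q \<and>
            (\<forall>h Q'. eig_pair tm tM al r lam h Q' \<longrightarrow>
                 h = H lam \<and> (\<forall>t\<in>{tm..tM}. Q' t = Q t))" for lam
  proof (cases "lam = 0")
    case True
    define Q0 where "Q0 = (\<lambda>t::real. 1/(tM-tm))"
    have "eig_pair tm tM al r 0 r Q0"
      unfolding eig_pair_def
    proof (intro conjI exI[of _ "\<lambda>_. 0"])
      show "\<forall>t\<in>{tm..tM}. (Q0 has_real_derivative 0) (at t within {tm..tM})"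
        by (simp add: Q0_def)
      show "\<forall>t\<in>{tm<..<tM}. ((\<lambda>_. 0::real) has_real_derivative 0) (at t)" by simp
      show "\<forall>t\<in>{tm<..<tM}. (- r + t * 0\<^sup>2 + r) * Q0 t + al * 0 = 0" by simp
      show "\<forall>t\<in>{tm<..<tM}. 0 < Q0 t" using ab by (simp add: Q0_def)
      show "(Q0 has_integral 1) {tm..tM}"
        using has_integral_const_real[of "1/(tM-tm)" tm tM] ab by (simp add: Q0_def)
    qed simp_all
    moreover have "h = r \<and> (\<forall>t\<in>{tm..tM}. Q' t = Q0 t)" if "eig_pair tm tM al r 0 h Q'" for h Q'
      using eig0[OF that ab al] by (simp add: Q0_def)
    ultimately show ?thesis using True H0 by auto
  next
    case False
    define m where "m = \<bar>lam\<bar>"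
    have m: "m > 0" using False by (simp add: m_def)
    have Hm: "H lam = m * c m" using Hnz[OF False] by (simp add: m_def)
    obtain Q where Q: "eig_pair tm tM al r m (m * c m) Q"
      and U: "\<And>d Q'. eig_pair tm tM al r m (m * d) Q' \<Longrightarrow> d = c m \<and> (\<forall>t\<in>{tm..tM}. Q' t = Q t)"
      using exuniq_c[OF m] by blast
    show ?thesis
    proof (intro exI[of _ Q] conjI allI impI)
      show "eig_pair tm tM al r lam (H lam) Q" using Q Hm eig_abs by (simp add: m_def)
      fix h Q' assume e: "eig_pair tm tM al r lam h Q'"
      then have "eig_pair tm tM al r m (m * (h/m)) Q'" using m eig_abs by (simp add: m_def)
      from U[OF this] have "h/m = c m" "\<forall>t\<in>{tm..tM}. Q' t = Q t" by auto
      then show "h = H lam" "\<forall>t\<in>{tm..tM}. Q' t = Q t" using m Hm by (auto simp: field_simps)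
    qed
  qed
  have bnd: "lam\<^sup>2 * tm + r \<le> H lam \<and> H lam \<le> lam\<^sup>2 * tM + r" for lam
  proof (cases "lam = 0")
    case True then show ?thesis by (simp add: H0)
  next
    case False
    then have "\<bar>lam\<bar> > 0" by simp
    from bounds_c[OF this] show ?thesis using Hnz[OF False] by simp
  qed
  have cont: "continuous_on UNIV H"
  proof (intro continuous_at_imp_continuous_on ballI)
    fix x :: real
    show "isCont H x"
    proof (cases "x = 0")
      case True
      have "(H \<longlongrightarrow> H 0) (at 0)"
      proof (rule tendsto_sandwich[where f="\<lambda>l. l\<^sup>2 * tm + r" and h="\<lambda>l. l\<^sup>2 * tM + r"])
        show "\<forall>\<^sub>F n in at 0. n\<^sup>2 * tm + r \<le> H n" using bnd by simp
        show "\<forall>\<^sub>F n in at 0. H n \<le> n\<^sup>2 * tM + r" using bnd by simp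
        have "((\<lambda>l. l\<^sup>2 * tm + r) \<longlongrightarrow> 0\<^sup>2 * tm + r) (at 0)"
          by (intro tendsto_intros)
        then show "((\<lambda>l. l\<^sup>2 * tm + r) \<longlongrightarrow> H 0) (at 0)" by (simp add: H0)
        have "((\<lambda>l. l\<^sup>2 * tM + r) \<longlongrightarrow> 0\<^sup>2 * tM + r) (at 0)"
          by (intro tendsto_intros)
        then show "((\<lambda>l. l\<^sup>2 * tM + r) \<longlongrightarrow> H 0) (at 0)" by (simp add: H0)
      qed
      then show ?thesis using True by (simp add: isCont_def)
    next
      case False
      have ev: "eventually (\<lambda>l. H l = \<bar>l\<bar> * c \<bar>l\<bar>) (nhds x)"
        using t1_space_nhds[OF False] by eventually_elim (simp add: Hnz)
      have "isCont c \<bar>x\<bar>"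
        using cont_c False continuous_on_eq_continuous_at[of "{0<..}" c] by auto
      then have "isCont (\<lambda>l. \<bar>l\<bar> * c \<bar>l\<bar>) x"
        by (intro continuous_intros isCont_o2[where f=abs and g=c]) auto
      then show ?thesis using isCont_cong[OF ev] by simp
    qed
  qed
  have conv: "convex_on UNIV H"
  proof (rule convex_onI)
    fix t x y :: real assume t: "0 < t" "t < 1"
    obtain Qx where Qx: "eig_pair tm tM al r x (H x) Qx" using exH[of x] by blast
    obtain Qy where Qy: "eig_pair tm tM al r y (H y) Qy" using exH[of y] by blast
    obtain Qz where Qz: "eig_pair tm tM al r ((1-t)*x + t*y) (H ((1-t)*x + t*y)) Qz"
      using exH[of "(1-t)*x + t*y"] by blast
    show "H ((1 - t) *\<^sub>R x + t *\<^sub>R y) \<le> (1 - t) * H x + t * H y"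
      using conv_step[OF ab tm al Qx Qy Qz _ _ refl] t by simp
  qed simp
  obtain ls where ls: "ls > 0" and lsmin: "\<And>l. l > 0 \<Longrightarrow> c ls \<le> c l" using min_c by blast
  have csls: "cs = c ls"
    unfolding cs_def cstar_def c_def[symmetric]
    by (rule cInf_eq_minimum) (use ls lsmin in auto)
  have inf: "(INF s\<in>{0<..}. s * H (lam / s)) = \<bar>lam\<bar> * cs" for lam
  proof (cases "lam = 0")
    case True
    have "(\<lambda>s. s * H (lam / s)) ` {0<..} = {0<..}"
    proof (rule set_eqI)
      fix y :: real
      show "y \<in> (\<lambda>s. s * H (lam / s)) ` {0<..} \<longleftrightarrow> y \<in> {0<..}"
      proof
        assume "y \<in> (\<lambda>s. s * H (lam / s)) ` {0<..}"
        then show "y \<in> {0<..}" using True H0 r by auto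
      next
        assume y: "y \<in> {0<..}"
        then have "y = (y/r) * H (lam / (y/r))" "y/r \<in> {0<..}" using True H0 r by auto
        then show "y \<in> (\<lambda>s. s * H (lam / s)) ` {0<..}" by blast
      qed
    qed
    then show ?thesis using True by simp
  next
    case False
    have val: "s * H (lam / s) = \<bar>lam\<bar> * c (\<bar>lam\<bar>/s)" if s: "s > 0" for s
    proof -
      have "lam / s \<noteq> 0" using False s by simp
      then have "H (lam/s) = \<bar>lam/s\<bar> * c \<bar>lam/s\<bar>" by (rule Hnz)
      moreover have "\<bar>lam/s\<bar> = \<bar>lam\<bar>/s" using s by simp
      ultimately show ?thesis using s by simp
    qed
    show ?thesis
    proof (rule cInf_eq_minimum)
      have "\<bar>lam\<bar>/ls > 0" using False ls by simp
      moreover have "\<bar>lam\<bar>/(\<bar>lam\<bar>/ls) = ls" using False ls by simp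
      ultimately show "\<bar>lam\<bar> * cs \<in> (\<lambda>s. s * H (lam / s)) ` {0<..}"
        using val[of "\<bar>lam\<bar>/ls"] csls by (intro image_eqI[of _ _ "\<bar>lam\<bar>/ls"]) auto
    next
      fix y assume "y \<in> (\<lambda>s. s * H (lam / s)) ` {0<..}"
      then obtain s where s: "s > 0" and y: "y = s * H (lam / s)" by auto
      have "c ls \<le> c (\<bar>lam\<bar>/s)" using lsmin False s by simp
      then show "\<bar>lam\<bar> * cs \<le> y" using val[OF s] y csls by (simp add: mult_left_mono)
    qed
  qed
  have lo: "2 * sqrt (tm * r) \<le> cs"
  proof -
    have b1: "ls\<^sup>2 * tm + r \<le> ls * c ls" using bounds_c[OF ls] by simp
    have "0 \<le> (ls * sqrt tm - sqrt r)\<^sup>2" by simp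
    then have "2 * ls * (sqrt tm * sqrt r) \<le> ls\<^sup>2 * tm + r"
      using tm r by (simp add: power2_diff power_mult_distrib algebra_simps)
    then have "ls * (2 * sqrt (tm * r)) \<le> ls * c ls"
      using b1 by (simp add: real_sqrt_mult algebra_simps)
    then show ?thesis using ls csls by simp
  qed
  have hi: "cs \<le> 2 * sqrt (tM * r)"
  proof -
    define l0 where "l0 = sqrt (r / tM)"
    have l0: "l0 > 0" using r tm ab by (simp add: l0_def)
    have sq: "l0\<^sup>2 = r / tM" using r tm ab by (simp add: l0_def)
    have b2: "l0 * c l0 \<le> l0\<^sup>2 * tM + r" using bounds_c[OF l0] by simp
    have "l0\<^sup>2 * tM + r = 2 * r" using sq tm ab by simp
    moreover have "l0 * sqrt (tM * r) = r"
    proof -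
      have "l0 * sqrt (tM * r) = sqrt (r / tM * (tM * r))" unfolding l0_def by (rule real_sqrt_mult[symmetric])
      also have "\<dots> = sqrt (r\<^sup>2)" using tm ab by (simp add: power2_eq_square)
      also have "\<dots> = r" using r by simp
      finally show ?thesis .
    qed
    ultimately have "l0 * c l0 \<le> l0 * (2 * sqrt (tM * r))" using b2 by (simp add: algebra_simps)
    then have "c l0 \<le> 2 * sqrt (tM * r)" using l0 by simp
    then show ?thesis using lsmin[OF l0] csls by simp
  qed
  show ?thesis using exH cont conv bnd inf lo hi by blast
qed

end
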